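(* For positive integers $K\le P$ and $\theta=(K,P)$, we have $\lim_{n\to\infty}C^\star(\mathbb{K}(n;\theta))=C_{\rm K}(\theta)$ almost surely, where $C_{\rm K}(\theta)=\beta(\theta)/(1-q(\theta))^2$.
   Context: Random key graph: for positive integers $K\le P$, $\theta=(K,P)$ and $n\ge3$, let $K_1(\theta),\dots,K_n(\theta)$ be i.i.d. random subsets of $\{1,\dots,P\}$, each uniform over the $K$-element subsets; the random key graph $\mathbb{K}(n;\theta)$ on $\{1,\dots,n\}$ has an edge between distinct $i,j$ iff $K_i(\theta)\cap K_j(\theta)\ne\emptyset$. All graphs for different $n$ are defined on a common probability space. $q(\theta)=\binom{P-K}{K}/\binom{P}{K}$ if $2K\le P$ and $0$ otherwise; $r(\theta)=\binom{P-2K}{K}/\binom{P}{K}$ if $3K\le P$ and $0$ otherwise; $\beta(\theta)=(1-q)^3+q^3-qr$. For a finite simple graph $G$ with vertex set $V$, let $T_i(G)$ be the number of triangles containing vertex $i$ and $d_i$ its degree; the global clustering coefficient is $C^\star(G)=\sum_{i\in V}T_i(G)\big/\big(\tfrac12\sum_{i\in V}d_i(d_i-1)\big)$ if $\sum_i d_i(d_i-1)>0$, and $C^\star(G)=0$ otherwise. *)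

theory Defs
  imports "HOL-Probability.Probability"
begin

definition graph_degree :: "'v set \<Rightarrow> ('v \<Rightarrow> 'v \<Rightarrow> bool) \<Rightarrow> 'v \<Rightarrow> nat" where
  "graph_degree V E i = card {j \<in> V. E i j}"

definition triangles_at :: "'v set \<Rightarrow> ('v \<Rightarrow> 'v \<Rightarrow> bool) \<Rightarrow> 'v \<Rightarrow> nat" where
  "triangles_at V E i =
     card {{j, k} | j k. j \<in> V \<and> k \<in> V \<and> j \<noteq> k \<and> E i j \<and> E i k \<and> E j k}"

definition global_clustering :: "'v set \<Rightarrow> ('v \<Rightarrow> 'v \<Rightarrow> bool) \<Rightarrow> real" where
  "global_clustering V E =
     (let D = (\<Sum>i\<in>V. graph_degree V E i * (graph_degree V E i - 1)) in
      if D > 0 then real (\<Sum>i\<in>V. triangles_at V E i) / (real D / 2) else 0)"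

definition key_rings :: "nat \<Rightarrow> nat \<Rightarrow> nat set set" where
  "key_rings K P = {S. S \<subseteq> {1..P} \<and> card S = K}"

definition rkg_edge :: "(nat \<Rightarrow> 'w \<Rightarrow> nat set) \<Rightarrow> 'w \<Rightarrow> nat \<Rightarrow> nat \<Rightarrow> bool" where
  "rkg_edge Ks \<omega> i j \<longleftrightarrow> i \<noteq> j \<and> Ks i \<omega> \<inter> Ks j \<omega> \<noteq> {}"

definition rkg_q :: "nat \<Rightarrow> nat \<Rightarrow> real" where
  "rkg_q K P = (if 2 * K \<le> P then real ((P - K) choose K) / real (P choose K) else 0)"

definition rkg_r :: "nat \<Rightarrow> nat \<Rightarrow> real" where
  "rkg_r K P = (if 3 * K \<le> P then real ((P - 2 * K) choose K) / real (P choose K) else 0)"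

definition rkg_beta :: "nat \<Rightarrow> nat \<Rightarrow> real" where
  "rkg_beta K P = (1 - rkg_q K P) ^ 3 + rkg_q K P ^ 3 - rkg_q K P * rkg_r K P"

definition rkg_CK :: "nat \<Rightarrow> nat \<Rightarrow> real" where
  "rkg_CK K P = rkg_beta K P / (1 - rkg_q K P) ^ 2"

end

theory Submission
  imports Defs
begin


definition rA :: "nat set \<Rightarrow> nat set \<Rightarrow> real" where
  "rA s t = (if s \<inter> t = {} then 0 else 1)"

lemma sum_indicator_card:
  assumes "finite A"
  shows "(\<Sum>t\<in>A. if Q t then (1::real) else 0) = real (card {t\<in>A. Q t})"
  using assms by (simp add: sum.If_cases Int_def)

lemma key_rings_finite: "finite (key_rings K P)"
  unfolding key_rings_def by (rule finite_subset[of _ "Pow {1..P}"]) auto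

lemma key_rings_card: "card (key_rings K P) = P choose K"
  unfolding key_rings_def using n_subsets[of "{1..P}" K] by simp

lemma disj_count:
  assumes "s \<in> key_rings K P"
  shows "card {t\<in>key_rings K P. s \<inter> t = {}} = (P - K) choose K"
proof -
  have s: "s \<subseteq> {1..P}" "card s = K" using assms by (auto simp: key_rings_def)
  have "{t\<in>key_rings K P. s \<inter> t = {}} = {t. t \<subseteq> {1..P} - s \<and> card t = K}"
    by (auto simp: key_rings_def)
  moreover have "card ({1..P} - s) = P - K"
    using s by (simp add: card_Diff_subset finite_subset)
  ultimately show ?thesis using n_subsets[of "{1..P} - s" K] by simp
qed

lemma disj2_count:
  assumes "s \<in> key_rings K P" "t \<in> key_rings K P" "s \<inter> t = {}"
  shows "card {u\<in>key_rings K P. s \<inter> u = {} \<and> t \<inter> u = {}} = (P - 2*K) choose K"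
proof -
  have s: "s \<subseteq> {1..P}" "card s = K" "t \<subseteq> {1..P}" "card t = K" using assms by (auto simp: key_rings_def)
  have fs: "finite s" "finite t" using s finite_subset by blast+
  have "{u\<in>key_rings K P. s \<inter> u = {} \<and> t \<inter> u = {}} = {u. u \<subseteq> {1..P} - (s \<union> t) \<and> card u = K}"
    by (auto simp: key_rings_def)
  moreover have "card (s \<union> t) = 2*K" using card_Un_disjoint[OF fs assms(3)] s by simp
  moreover have "card ({1..P} - (s \<union> t)) = P - card (s \<union> t)"
    using s fs by (subst card_Diff_subset) auto
  ultimately show ?thesis using n_subsets[of "{1..P} - (s \<union> t)" K] by simp
qed

definition rB :: "nat set \<Rightarrow> nat set \<Rightarrow> real" where
  "rB s t = (if s \<inter> t = {} then 1 else 0)"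

lemma rA_rB: "rA s t = 1 - rB s t" by (simp add: rA_def rB_def)
lemma rB_sym: "rB s t = rB t s" by (simp add: rB_def Int_commute)

context
  fixes K P :: nat
begin

abbreviation "SS \<equiv> key_rings K P"

lemma sum_rB: "s \<in> SS \<Longrightarrow> (\<Sum>t\<in>SS. rB s t) = real ((P - K) choose K)"
  unfolding rB_def by (simp add: sum_indicator_card key_rings_finite disj_count)

lemma sum_rB': "s \<in> SS \<Longrightarrow> (\<Sum>t\<in>SS. rB t s) = real ((P - K) choose K)"
proof -
  assume "s \<in> SS"
  have "(\<Sum>t\<in>SS. rB t s) = (\<Sum>t\<in>SS. rB s t)" by (rule sum.cong) (simp_all add: rB_def Int_commute)
  then show ?thesis using sum_rB[OF \<open>s \<in> SS\<close>] by simp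
qed

lemma sum_rA: "s \<in> SS \<Longrightarrow> (\<Sum>t\<in>SS. rA s t) = real (card SS) - real ((P - K) choose K)"
  by (simp add: rA_rB sum_subtractf sum_rB)

lemma sum_rBrB: "s \<in> SS \<Longrightarrow> t \<in> SS \<Longrightarrow> rB s t = 1 \<Longrightarrow>
   (\<Sum>u\<in>SS. rB s u * rB t u) = real ((P - 2*K) choose K)"
proof -
  assume a: "s \<in> SS" "t \<in> SS" "rB s t = 1"
  then have st: "s \<inter> t = {}" by (simp add: rB_def split: if_splits)
  have "(\<Sum>u\<in>SS. rB s u * rB t u) = (\<Sum>u\<in>SS. if s \<inter> u = {} \<and> t \<inter> u = {} then 1 else 0)"
    by (intro sum.cong) (auto simp: rB_def)
  also have "\<dots> = real ((P - 2*K) choose K)"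
    using disj2_count[OF a(1,2) st] by (simp add: sum_indicator_card key_rings_finite)
  finally show ?thesis .
qed

lemma L2_sum:
  "(\<Sum>s\<in>SS. (\<Sum>t\<in>SS. rA s t)^2) = real (card SS) * (real (card SS) - real ((P - K) choose K))^2"
  by (simp add: sum_rA)

lemma L3_sum:
  "(\<Sum>s\<in>SS. \<Sum>t\<in>SS. \<Sum>u\<in>SS. rA s t * rA s u * rA t u) =
   real (card SS) * ((real (card SS))^2 - 3 * real (card SS) * real ((P - K) choose K)
      + 3 * (real ((P - K) choose K))^2 - real ((P - K) choose K) * real ((P - 2*K) choose K))"
proof -
  define m where "m = real (card SS)"
  define d where "d = real ((P - K) choose K)"
  define e where "e = real ((P - 2*K) choose K)"
  define h where "h s t = (\<Sum>u\<in>SS. rB s u * rB t u)" for s t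
  have inner: "(\<Sum>u\<in>SS. rA s u * rA t u) = m - 2*d + h s t" if "s \<in> SS" "t \<in> SS" for s t
  proof -
    have "(\<Sum>u\<in>SS. rA s u * rA t u) = (\<Sum>u\<in>SS. 1 - rB s u - rB t u + rB s u * rB t u)"
      by (intro sum.cong) (auto simp: rA_rB algebra_simps)
    also have "\<dots> = m - 2*d + h s t"
      using that by (simp add: sum.distrib sum_subtractf sum_rB m_def d_def h_def)
    finally show ?thesis .
  qed
  have hsum: "(\<Sum>t\<in>SS. h s t) = d * d" if "s \<in> SS" for s
  proof -
    have "(\<Sum>t\<in>SS. h s t) = (\<Sum>u\<in>SS. \<Sum>t\<in>SS. rB s u * rB t u)"
      unfolding h_def by (rule sum.swap)
    also have "\<dots> = (\<Sum>u\<in>SS. rB s u * (\<Sum>t\<in>SS. rB t u))"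
      by (simp add: sum_distrib_left)
    also have "\<dots> = (\<Sum>u\<in>SS. rB s u * d)"
      by (intro sum.cong) (auto simp: sum_rB' d_def)
    also have "\<dots> = d * d" using that by (simp add: sum_distrib_right[symmetric] sum_rB d_def)
    finally show ?thesis .
  qed
  have hBsum: "(\<Sum>t\<in>SS. rB s t * h s t) = d * e" if "s \<in> SS" for s
  proof -
    have "(\<Sum>t\<in>SS. rB s t * h s t) = (\<Sum>t\<in>SS. rB s t * e)"
    proof (rule sum.cong[OF refl])
      fix t assume t: "t \<in> SS"
      show "rB s t * h s t = rB s t * e"
      proof (cases "rB s t = 1")
        case True
        then show ?thesis using sum_rBrB[OF that t True] by (simp add: h_def e_def)
      next
        case False
        then have "rB s t = 0" by (simp add: rB_def split: if_splits)
        then show ?thesis by simp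
      qed
    qed
    also have "\<dots> = d * e" using that by (simp add: sum_distrib_right[symmetric] sum_rB d_def)
    finally show ?thesis .
  qed
  have per_s: "(\<Sum>t\<in>SS. \<Sum>u\<in>SS. rA s t * rA s u * rA t u) = m^2 - 3*m*d + 3*d^2 - d*e" if "s \<in> SS" for s
  proof -
    have "(\<Sum>t\<in>SS. \<Sum>u\<in>SS. rA s t * rA s u * rA t u) = (\<Sum>t\<in>SS. rA s t * (\<Sum>u\<in>SS. rA s u * rA t u))"
      by (simp add: sum_distrib_left mult.assoc)
    also have "\<dots> = (\<Sum>t\<in>SS. rA s t * (m - 2*d + h s t))"
      by (rule sum.cong[OF refl]) (simp add: inner that)
    also have "\<dots> = (\<Sum>t\<in>SS. (m - 2*d) - (m-2*d) * rB s t + h s t - rB s t * h s t)"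
      by (intro sum.cong) (auto simp: rA_rB algebra_simps)
    also have "\<dots> = m*(m - 2*d) - (m - 2*d)*d + d*d - d*e"
      using that by (simp add: sum.distrib sum_subtractf hsum hBsum sum_distrib_left[symmetric] sum_rB m_def d_def)
    also have "\<dots> = m^2 - 3*m*d + 3*d^2 - d*e" by (simp add: algebra_simps power2_eq_square)
    finally show ?thesis .
  qed
  show ?thesis
    by (simp add: per_s m_def[symmetric] d_def[symmetric] e_def[symmetric])
qed

end



lemma sum_group_fibers:
  fixes g :: "'b \<Rightarrow> real"
  assumes "finite V" "finite T" "\<And>i. i \<in> V \<Longrightarrow> x i \<in> T"
  shows "(\<Sum>i\<in>V. g (x i)) = (\<Sum>s\<in>T. real (card {i\<in>V. x i = s}) * g s)"
proof -
  have "(\<Sum>s\<in>T. \<Sum>i\<in>{i. i \<in> V \<and> x i = s}. g (x i)) = (\<Sum>i\<in>V. g (x i))"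
    by (rule sum.group) (use assms in auto)
  then have "(\<Sum>i\<in>V. g (x i)) = (\<Sum>s\<in>T. \<Sum>i\<in>{i. i \<in> V \<and> x i = s}. g (x i))" by simp
  also have "\<dots> = (\<Sum>s\<in>T. real (card {i\<in>V. x i = s}) * g s)"
  proof (rule sum.cong[OF refl])
    fix s assume "s \<in> T"
    have "(\<Sum>i\<in>{i. i \<in> V \<and> x i = s}. g (x i)) = (\<Sum>i\<in>{i. i \<in> V \<and> x i = s}. g s)"
      by (rule sum.cong) auto
    then show "(\<Sum>i\<in>{i. i \<in> V \<and> x i = s}. g (x i)) = real (card {i\<in>V. x i = s}) * g s" by simp
  qed
  finally show ?thesis .
qed

lemma card_pairs:
  fixes R :: "'a::linorder \<Rightarrow> 'a \<Rightarrow> bool"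
  assumes "finite V" and sym: "\<And>j k. R j k \<Longrightarrow> R k j"
  shows "card {(j,k). j \<in> V \<and> k \<in> V \<and> j \<noteq> k \<and> R j k}
       = 2 * card {{j, k} | j k. j \<in> V \<and> k \<in> V \<and> j \<noteq> k \<and> R j k}"
proof -
  define O1 where "O1 = {(j,k). j \<in> V \<and> k \<in> V \<and> j < k \<and> R j k}"
  define O2 where "O2 = {(j,k). j \<in> V \<and> k \<in> V \<and> k < j \<and> R j k}"
  define U where "U = {{j, k} | j k. j \<in> V \<and> k \<in> V \<and> j \<noteq> k \<and> R j k}"
  have fO: "finite O1" "finite O2"
    unfolding O1_def O2_def by (rule finite_subset[of _ "V \<times> V"], auto simp: assms)+
  have split: "{(j,k). j \<in> V \<and> k \<in> V \<and> j \<noteq> k \<and> R j k} = O1 \<union> O2"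
    unfolding O1_def O2_def by auto
  have disj: "O1 \<inter> O2 = {}" unfolding O1_def O2_def by auto
  have "bij_betw (\<lambda>(j,k). (k,j)) O1 O2"
    unfolding O1_def O2_def by (rule bij_betwI[where g="\<lambda>(j,k). (k,j)"]) (auto intro: sym)
  then have c12: "card O1 = card O2" by (rule bij_betw_same_card)
  have "bij_betw (\<lambda>(j,k). {j,k}) O1 U"
  proof (rule bij_betw_imageI)
    show "inj_on (\<lambda>(j, k). {j, k}) O1"
    proof (rule inj_onI, clarify)
      fix a b c d assume "(a,b) \<in> O1" "(c,d) \<in> O1" "{a,b} = {c,d}"
      then show "a = c \<and> b = d" unfolding O1_def by (auto simp: doubleton_eq_iff)
    qed
    show "(\<lambda>(j, k). {j, k}) ` O1 = U"
    proof
      show "(\<lambda>(j, k). {j, k}) ` O1 \<subseteq> U" unfolding O1_def U_def by auto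
      show "U \<subseteq> (\<lambda>(j, k). {j, k}) ` O1"
      proof
        fix X assume "X \<in> U"
        then obtain j k where X: "X = {j,k}" "j \<in> V" "k \<in> V" "j \<noteq> k" "R j k" unfolding U_def by auto
        show "X \<in> (\<lambda>(j, k). {j, k}) ` O1"
        proof (cases "j < k")
          case True
          then have "(j,k) \<in> O1" using X unfolding O1_def by auto
          then show ?thesis using X by force
        next
          case False
          then have "(k,j) \<in> O1" using X sym unfolding O1_def by auto
          then show ?thesis using X by (force simp: insert_commute)
        qed
      qed
    qed
  qed
  then have "card O1 = card U" by (rule bij_betw_same_card)
  moreover have "card (O1 \<union> O2) = card O1 + card O2" using card_Un_disjoint fO disj by blast
  ultimately show ?thesis unfolding split U_def[symmetric] using c12 by linarith
qed

lemma real_nat_mult_pred: "real (d * (d - 1)) = real d * (real d - 1)"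
  by (cases d) (auto simp: algebra_simps)

lemma card_pairs_sum:
  assumes "finite V"
  shows "real (card {(j,k). j \<in> V \<and> k \<in> V \<and> Q j k}) = (\<Sum>j\<in>V. \<Sum>k\<in>V. if Q j k then 1 else 0)"
proof -
  have "{(j,k). j \<in> V \<and> k \<in> V \<and> Q j k} = {p \<in> V \<times> V. Q (fst p) (snd p)}" by auto
  then have "real (card {(j,k). j \<in> V \<and> k \<in> V \<and> Q j k}) = (\<Sum>p\<in>V \<times> V. if Q (fst p) (snd p) then 1 else 0)"
    using assms by (simp add: sum_indicator_card)
  also have "\<dots> = (\<Sum>j\<in>V. \<Sum>k\<in>V. if Q j k then 1 else 0)"
    by (simp add: sum.cartesian_product case_prod_beta)
  finally show ?thesis .
qed

lemma triple_scale:
  fixes c :: real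
  shows "(\<Sum>s\<in>A. (c*f s) * (\<Sum>t\<in>A. (c*f t) * (\<Sum>u\<in>A. (c * f u) * r s t u))) =
         c^3 * (\<Sum>s\<in>A. f s * (\<Sum>t\<in>A. f t * (\<Sum>u\<in>A. f u * r s t u)))"
  by (simp add: sum_distrib_left mult_ac power3_eq_cube)

context
  fixes K P :: nat and x :: "nat \<Rightarrow> nat set"
  assumes K1: "1 \<le> K" and xS: "\<And>i. 1 \<le> i \<Longrightarrow> x i \<in> key_rings K P"
begin

lemma x_ne: "1 \<le> i \<Longrightarrow> x i \<noteq> {}"
  using xS[of i] K1 by (auto simp: key_rings_def)

lemma rA_self: "1 \<le> i \<Longrightarrow> rA (x i) (x i) = 1"
  using x_ne by (simp add: rA_def)

lemma deg_eq:
  assumes i: "i \<in> {1..n}"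
  shows "real (graph_degree {1..n} (\<lambda>i j. i \<noteq> j \<and> x i \<inter> x j \<noteq> {}) i)
       = (\<Sum>j\<in>{1..n}. rA (x i) (x j)) - 1"
proof -
  have "{j\<in>{1..n}. i \<noteq> j \<and> x i \<inter> x j \<noteq> {}} = {j\<in>{1..n}. x i \<inter> x j \<noteq> {}} - {i}" by auto
  moreover have imem: "i \<in> {j\<in>{1..n}. x i \<inter> x j \<noteq> {}}" using i x_ne[of i] by auto
  ultimately have c: "card {j\<in>{1..n}. i \<noteq> j \<and> x i \<inter> x j \<noteq> {}} = card {j\<in>{1..n}. x i \<inter> x j \<noteq> {}} - 1"
    by simp
  have pos: "card {j\<in>{1..n}. x i \<inter> x j \<noteq> {}} \<ge> 1"
  proof -
    have "finite {j\<in>{1..n}. x i \<inter> x j \<noteq> {}}" by simp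
    then have "card {j\<in>{1..n}. x i \<inter> x j \<noteq> {}} > 0" using imem card_gt_0_iff by blast
    then show ?thesis by simp
  qed
  have "(\<Sum>j\<in>{1..n}. rA (x i) (x j)) = (\<Sum>j\<in>{1..n}. if x i \<inter> x j \<noteq> {} then 1 else 0)"
    by (rule sum.cong) (auto simp: rA_def)
  also have "\<dots> = real (card {j\<in>{1..n}. x i \<inter> x j \<noteq> {}})" by (rule sum_indicator_card) simp
  finally show ?thesis unfolding graph_degree_def c using pos by (simp add: of_nat_diff)
qed

lemma D_eq:
  "real (\<Sum>i\<in>{1..n}. graph_degree {1..n} (\<lambda>i j. i \<noteq> j \<and> x i \<inter> x j \<noteq> {}) i *
            (graph_degree {1..n} (\<lambda>i j. i \<noteq> j \<and> x i \<inter> x j \<noteq> {}) i - 1))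
   = (\<Sum>i\<in>{1..n}. ((\<Sum>j\<in>{1..n}. rA (x i) (x j)) - 1) * ((\<Sum>j\<in>{1..n}. rA (x i) (x j)) - 2))"
  unfolding of_nat_sum
proof (rule sum.cong[OF refl])
  fix i assume i: "i \<in> {1..n}"
  have "real (graph_degree {1..n} (\<lambda>i j. i \<noteq> j \<and> x i \<inter> x j \<noteq> {}) i) = (\<Sum>j\<in>{1..n}. rA (x i) (x j)) - 1"
    by (rule deg_eq[OF i])
  then show "real (graph_degree {1..n} (\<lambda>i j. i \<noteq> j \<and> x i \<inter> x j \<noteq> {}) i *
            (graph_degree {1..n} (\<lambda>i j. i \<noteq> j \<and> x i \<inter> x j \<noteq> {}) i - 1)) =
       ((\<Sum>j\<in>{1..n}. rA (x i) (x j)) - 1) * ((\<Sum>j\<in>{1..n}. rA (x i) (x j)) - 2)"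
    unfolding real_nat_mult_pred by (simp only:) (simp add: algebra_simps)
qed

lemma tri_eq:
  assumes "i \<in> {1..n}"
  shows "2 * real (triangles_at {1..n} (\<lambda>i j. i \<noteq> j \<and> x i \<inter> x j \<noteq> {}) i) =
    (\<Sum>j\<in>{1..n}. \<Sum>k\<in>{1..n}. if j \<noteq> k \<and> (i \<noteq> j \<and> x i \<inter> x j \<noteq> {}) \<and> (i \<noteq> k \<and> x i \<inter> x k \<noteq> {})
         \<and> (j \<noteq> k \<and> x j \<inter> x k \<noteq> {}) then 1 else 0)"
proof -
  have "card {(j,k). j \<in> {1..n} \<and> k \<in> {1..n} \<and> j \<noteq> k \<and> ((i \<noteq> j \<and> x i \<inter> x j \<noteq> {}) \<and> (i \<noteq> k \<and> x i \<inter> x k \<noteq> {})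
         \<and> (j \<noteq> k \<and> x j \<inter> x k \<noteq> {}))}
       = 2 * card {{j, k} | j k. j \<in> {1..n} \<and> k \<in> {1..n} \<and> j \<noteq> k \<and> ((i \<noteq> j \<and> x i \<inter> x j \<noteq> {}) \<and> (i \<noteq> k \<and> x i \<inter> x k \<noteq> {})
         \<and> (j \<noteq> k \<and> x j \<inter> x k \<noteq> {}))}"
    by (rule card_pairs) auto
  moreover have "real (card {(j,k). j \<in> {1..n} \<and> k \<in> {1..n} \<and> (j \<noteq> k \<and> ((i \<noteq> j \<and> x i \<inter> x j \<noteq> {}) \<and> (i \<noteq> k \<and> x i \<inter> x k \<noteq> {})
         \<and> (j \<noteq> k \<and> x j \<inter> x k \<noteq> {})))}) =
    (\<Sum>j\<in>{1..n}. \<Sum>k\<in>{1..n}. if j \<noteq> k \<and> (i \<noteq> j \<and> x i \<inter> x j \<noteq> {}) \<and> (i \<noteq> k \<and> x i \<inter> x k \<noteq> {})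
         \<and> (j \<noteq> k \<and> x j \<inter> x k \<noteq> {}) then 1 else 0)"
    by (rule card_pairs_sum) simp
  ultimately show ?thesis unfolding triangles_at_def by (metis (no_types, lifting) of_nat_mult of_nat_numeral)
qed

lemma tri_pt:
  assumes "1 \<le> i" "1 \<le> j" "1 \<le> k"
  shows "0 \<le> rA (x i) (x j) * rA (x i) (x k) * rA (x j) (x k) -
     (if j \<noteq> k \<and> (i \<noteq> j \<and> x i \<inter> x j \<noteq> {}) \<and> (i \<noteq> k \<and> x i \<inter> x k \<noteq> {})
         \<and> (j \<noteq> k \<and> x j \<inter> x k \<noteq> {}) then 1 else 0)"
    and "rA (x i) (x j) * rA (x i) (x k) * rA (x j) (x k) -
     (if j \<noteq> k \<and> (i \<noteq> j \<and> x i \<inter> x j \<noteq> {}) \<and> (i \<noteq> k \<and> x i \<inter> x k \<noteq> {})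
         \<and> (j \<noteq> k \<and> x j \<inter> x k \<noteq> {}) then 1 else 0)
     \<le> (if j = i then 1 else 0) + (if k = i then 1 else 0) + (if j = k then 1 else 0)"
  by (auto simp: rA_def)

lemma tri_bound:
  assumes i: "i \<in> {1..n}"
  defines "W \<equiv> (\<Sum>j\<in>{1..n}. \<Sum>k\<in>{1..n}. rA (x i) (x j) * rA (x i) (x k) * rA (x j) (x k))"
  shows "0 \<le> W - 2 * real (triangles_at {1..n} (\<lambda>i j. i \<noteq> j \<and> x i \<inter> x j \<noteq> {}) i)"
    and "W - 2 * real (triangles_at {1..n} (\<lambda>i j. i \<noteq> j \<and> x i \<inter> x j \<noteq> {}) i) \<le> 3 * real n"
proof -
  define Ind where "Ind j k = (if j \<noteq> k \<and> (i \<noteq> j \<and> x i \<inter> x j \<noteq> {}) \<and> (i \<noteq> k \<and> x i \<inter> x k \<noteq> {})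
         \<and> (j \<noteq> k \<and> x j \<inter> x k \<noteq> {}) then 1 else (0::real))" for j k
  have eq: "W - 2 * real (triangles_at {1..n} (\<lambda>i j. i \<noteq> j \<and> x i \<inter> x j \<noteq> {}) i) =
    (\<Sum>j\<in>{1..n}. \<Sum>k\<in>{1..n}. rA (x i) (x j) * rA (x i) (x k) * rA (x j) (x k) - Ind j k)"
    unfolding tri_eq[OF i] W_def Ind_def by (simp add: sum_subtractf)
  show "0 \<le> W - 2 * real (triangles_at {1..n} (\<lambda>i j. i \<noteq> j \<and> x i \<inter> x j \<noteq> {}) i)"
    unfolding eq Ind_def using i by (intro sum_nonneg tri_pt(1)) auto
  have "(\<Sum>j\<in>{1..n}. \<Sum>k\<in>{1..n}. rA (x i) (x j) * rA (x i) (x k) * rA (x j) (x k) - Ind j k)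
     \<le> (\<Sum>j\<in>{1..n}. \<Sum>k\<in>{1..n}. (if j = i then 1 else 0) + (if k = i then 1 else 0) + (if j = k then 1 else 0))"
    unfolding Ind_def using i by (intro sum_mono tri_pt(2)) auto
  also have "\<dots> = 3 * real n"
    using i by (simp add: sum.distrib sum_distrib_left[symmetric])
  finally show "W - 2 * real (triangles_at {1..n} (\<lambda>i j. i \<noteq> j \<and> x i \<inter> x j \<noteq> {}) i) \<le> 3 * real n"
    unfolding eq .
qed

end



context
  fixes K P :: nat and x :: "nat \<Rightarrow> nat set"
  assumes K1: "1 \<le> K" and xS: "\<And>i. 1 \<le> i \<Longrightarrow> x i \<in> key_rings K P"
begin

definition NN :: "nat set \<Rightarrow> nat \<Rightarrow> real" where
  "NN s n = real (card {i\<in>{1..n}. x i = s})"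

lemma regroup:
  fixes g :: "nat set \<Rightarrow> real"
  shows "(\<Sum>j\<in>{1..n}. g (x j)) = (\<Sum>s\<in>key_rings K P. NN s n * g s)"
  unfolding NN_def by (rule sum_group_fibers) (auto simp: key_rings_finite xS)

lemma W3_eq:
  "(\<Sum>i\<in>{1..n}. \<Sum>j\<in>{1..n}. \<Sum>k\<in>{1..n}. rA (x i) (x j) * rA (x i) (x k) * rA (x j) (x k)) =
   (\<Sum>s\<in>key_rings K P. NN s n * (\<Sum>t\<in>key_rings K P. NN t n * (\<Sum>u\<in>key_rings K P. NN u n * (rA s t * rA s u * rA t u))))"
proof -
  define SS where "SS = key_rings K P"
  have a: "(\<Sum>k\<in>{1..n}. rA (x i) (x j) * rA (x i) (x k) * rA (x j) (x k)) =
     (\<Sum>u\<in>SS. NN u n * (rA (x i) (x j) * rA (x i) u * rA (x j) u))" for i j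
    using regroup[where g="\<lambda>u. rA (x i) (x j) * rA (x i) u * rA (x j) u"] by (simp add: SS_def)
  have b: "(\<Sum>j\<in>{1..n}. \<Sum>u\<in>SS. NN u n * (rA (x i) (x j) * rA (x i) u * rA (x j) u)) =
     (\<Sum>t\<in>SS. NN t n * (\<Sum>u\<in>SS. NN u n * (rA (x i) t * rA (x i) u * rA t u)))" for i
    using regroup[where g="\<lambda>t. \<Sum>u\<in>SS. NN u n * (rA (x i) t * rA (x i) u * rA t u)"] by (simp add: SS_def)
  have c: "(\<Sum>i\<in>{1..n}. \<Sum>t\<in>SS. NN t n * (\<Sum>u\<in>SS. NN u n * (rA (x i) t * rA (x i) u * rA t u))) =
     (\<Sum>s\<in>SS. NN s n * (\<Sum>t\<in>SS. NN t n * (\<Sum>u\<in>SS. NN u n * (rA s t * rA s u * rA t u))))"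
    using regroup[where g="\<lambda>s. \<Sum>t\<in>SS. NN t n * (\<Sum>u\<in>SS. NN u n * (rA s t * rA s u * rA t u))"] by (simp add: SS_def)
  show ?thesis unfolding a b c SS_def[symmetric] ..
qed

lemma c_eq: "(\<Sum>j\<in>{1..n}. rA (x i) (x j)) = (\<Sum>t\<in>key_rings K P. NN t n * rA (x i) t)"
  using regroup[where g="\<lambda>t. rA (x i) t"] by simp

lemma W2_eq:
  "(\<Sum>i\<in>{1..n}. ((\<Sum>j\<in>{1..n}. rA (x i) (x j)) - 1) * ((\<Sum>j\<in>{1..n}. rA (x i) (x j)) - 2)) =
   (\<Sum>s\<in>key_rings K P. NN s n * (((\<Sum>t\<in>key_rings K P. NN t n * rA s t) - 1) * ((\<Sum>t\<in>key_rings K P. NN t n * rA s t) - 2)))"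
  unfolding c_eq
  using regroup[where g="\<lambda>s. ((\<Sum>t\<in>key_rings K P. NN t n * rA s t) - 1) * ((\<Sum>t\<in>key_rings K P. NN t n * rA s t) - 2)"]
  by simp

lemma q_eq: "rkg_q K P = real ((P - K) choose K) / real (card (key_rings K P))"
  unfolding rkg_q_def key_rings_card by (auto simp: binomial_eq_0)

lemma r_eq: "rkg_r K P = real ((P - 2*K) choose K) / real (card (key_rings K P))"
  unfolding rkg_r_def key_rings_card using K1 by (auto simp: binomial_eq_0)

lemma d_less: "(P - K) choose K < card (key_rings K P)"
proof -
  have s: "x 1 \<in> key_rings K P" using xS by simp
  have ne: "x 1 \<noteq> {}" using s K1 by (auto simp: key_rings_def)
  have "{t\<in>key_rings K P. x 1 \<inter> t = {}} \<subset> key_rings K P"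
  proof
    show "{t\<in>key_rings K P. x 1 \<inter> t = {}} \<subseteq> key_rings K P" by auto
    show "{t\<in>key_rings K P. x 1 \<inter> t = {}} \<noteq> key_rings K P" using s ne by blast
  qed
  then have "card {t\<in>key_rings K P. x 1 \<inter> t = {}} < card (key_rings K P)"
    by (rule psubset_card_mono[OF key_rings_finite])
  then show ?thesis using disj_count[OF s] by simp
qed

lemma card_pos: "card (key_rings K P) > 0"
  using d_less by simp

theorem det_limit:
  assumes lim: "\<And>s. s \<in> key_rings K P \<Longrightarrow> (\<lambda>n. NN s n / real n) \<longlonglongrightarrow> 1 / real (card (key_rings K P))"
  shows "(\<lambda>n. global_clustering {1..n} (\<lambda>i j. i \<noteq> j \<and> x i \<inter> x j \<noteq> {})) \<longlonglongrightarrow> rkg_CK K P"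
proof -
  define SS where "SS = key_rings K P"
  define E where "E = (\<lambda>i j. i \<noteq> j \<and> x i \<inter> x j \<noteq> {})"
  define m where "m = real (card SS)"
  define d where "d = real ((P - K) choose K)"
  define e where "e = real ((P - 2*K) choose K)"
  define p where "p = 1 / m"
  define f where "f s n = NN s n / real n" for s n
  have mpos: "m > 0" using card_pos by (simp add: m_def SS_def)
  have md: "m - d > 0" using d_less by (simp add: m_def d_def SS_def)
  have NNf: "NN s n = real n * f s n" if "n > 0" for s n using that by (simp add: f_def)
  define F where "F n = (\<Sum>s\<in>SS. f s n * (\<Sum>t\<in>SS. f t n * (\<Sum>u\<in>SS. f u n * (rA s t * rA s u * rA t u))))" for n
  define G where "G n = (\<Sum>s\<in>SS. f s n * (((\<Sum>t\<in>SS. f t n * rA s t) - 1 / real n) * ((\<Sum>t\<in>SS. f t n * rA s t) - 2 / real n)))" for n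
  define L3 where "L3 = (\<Sum>s\<in>SS. p * (\<Sum>t\<in>SS. p * (\<Sum>u\<in>SS. p * (rA s t * rA s u * rA t u))))"
  define L2 where "L2 = (\<Sum>s\<in>SS. p * (((\<Sum>t\<in>SS. p * rA s t) - 0) * ((\<Sum>t\<in>SS. p * rA s t) - 0)))"
  have flim: "(\<lambda>n. f s n) \<longlonglongrightarrow> p" if "s \<in> SS" for s
    using lim[of s] that by (simp add: f_def p_def m_def SS_def)
  have FL: "F \<longlonglongrightarrow> L3"
    unfolding F_def L3_def by (intro tendsto_intros flim)
  have GL: "G \<longlonglongrightarrow> L2"
    unfolding G_def L2_def by (intro tendsto_intros flim lim_1_over_n)
  have rowsum: "(\<Sum>t\<in>SS. p * rA s t) = p * (m - d)" if "s \<in> SS" for s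
    using sum_rA[OF that[unfolded SS_def]] by (simp add: sum_distrib_left[symmetric] m_def d_def SS_def)
  have L2v: "L2 = p^2 * (m - d)^2"
  proof -
    have "L2 = (\<Sum>s\<in>SS. p * (p * (m - d))^2)"
      unfolding L2_def by (rule sum.cong) (simp_all add: rowsum power2_eq_square)
    also have "\<dots> = m * p * (p * (m - d))^2" by (simp add: m_def)
    also have "\<dots> = p^2 * (m - d)^2" using mpos by (simp add: p_def power2_eq_square)
    finally show ?thesis .
  qed
  have L3v: "L3 = p^2 * (m^2 - 3*m*d + 3*d^2 - d*e)"
  proof -
    have "L3 = p^3 * (\<Sum>s\<in>SS. \<Sum>t\<in>SS. \<Sum>u\<in>SS. rA s t * rA s u * rA t u)"
      unfolding L3_def by (simp add: sum_distrib_left mult_ac power3_eq_cube)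
    also have "\<dots> = p^3 * (m * (m^2 - 3*m*d + 3*d^2 - d*e))"
      using L3_sum[of K P] by (simp add: SS_def m_def d_def e_def)
    also have "\<dots> = p^2 * (m^2 - 3*m*d + 3*d^2 - d*e)" using mpos
      by (simp add: p_def power2_eq_square power3_eq_cube)
    finally show ?thesis .
  qed
  have L2pos: "L2 > 0" using L2v mpos md by (simp add: p_def)
  have ratio: "L3 / L2 = rkg_CK K P"
  proof -
    have q: "rkg_q K P = d / m" and r: "rkg_r K P = e / m"
      using q_eq r_eq by (simp_all add: d_def e_def m_def SS_def)
    have "rkg_CK K P = ((1 - d/m)^3 + (d/m)^3 - d/m * (e/m)) / (1 - d/m)^2"
      unfolding rkg_CK_def rkg_beta_def q r ..
    also have "\<dots> = (m^2 - 3*m*d + 3*d^2 - d*e) / (m - d)^2"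
    proof -
      have num: "(1 - d/m)^3 + (d/m)^3 - d/m * (e/m) = (m^2 - 3*m*d + 3*d^2 - d*e) / m^2"
        using mpos by (simp add: field_simps power2_eq_square power3_eq_cube)
      have den: "(1 - d/m)^2 = (m - d)^2 / m^2"
        using mpos by (simp add: field_simps power2_eq_square)
      show ?thesis unfolding num den using mpos md by simp
    qed
    also have "\<dots> = L3 / L2" using mpos md
      unfolding L2v L3v by (simp add: p_def field_simps)
    finally show ?thesis by simp
  qed
  define W3 where "W3 n = (\<Sum>i\<in>{1..n}. \<Sum>j\<in>{1..n}. \<Sum>k\<in>{1..n}. rA (x i) (x j) * rA (x i) (x k) * rA (x j) (x k))" for n
  define TT where "TT n = real (\<Sum>i\<in>{1..n}. triangles_at {1..n} E i)" for n
  define DN where "DN n = (\<Sum>i\<in>{1..n}. graph_degree {1..n} E i * (graph_degree {1..n} E i - 1))" for n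
  have W3F: "W3 n = real n ^ 3 * F n" if "n > 0" for n
  proof -
    have "W3 n = (\<Sum>s\<in>SS. (real n * f s n) * (\<Sum>t\<in>SS. (real n * f t n) * (\<Sum>u\<in>SS. (real n * f u n) * (rA s t * rA s u * rA t u))))"
      unfolding W3_def W3_eq NNf[OF that] SS_def ..
    also have "\<dots> = real n ^ 3 * F n" unfolding F_def by (rule triple_scale)
    finally show ?thesis .
  qed
  have DG: "real (DN n) = real n ^ 3 * G n" if "n > 0" for n
  proof -
    have "real (DN n) = (\<Sum>i\<in>{1..n}. ((\<Sum>j\<in>{1..n}. rA (x i) (x j)) - 1) * ((\<Sum>j\<in>{1..n}. rA (x i) (x j)) - 2))"
      unfolding DN_def E_def by (rule D_eq[OF K1 xS])
    also have "\<dots> = (\<Sum>s\<in>SS. (real n * f s n) * (((\<Sum>t\<in>SS. (real n * f t n) * rA s t) - 1) * ((\<Sum>t\<in>SS. (real n * f t n) * rA s t) - 2)))"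
      unfolding W2_eq NNf[OF that] SS_def ..
    also have "\<dots> = (\<Sum>s\<in>SS. real n ^ 3 * (f s n * (((\<Sum>t\<in>SS. f t n * rA s t) - 1 / real n) * ((\<Sum>t\<in>SS. f t n * rA s t) - 2 / real n))))"
    proof (rule sum.cong[OF refl])
      fix s
      have h: "(\<Sum>t\<in>SS. (real n * f t n) * rA s t) = real n * (\<Sum>t\<in>SS. f t n * rA s t)"
        by (simp add: sum_distrib_left mult.assoc)
      show "(real n * f s n) * (((\<Sum>t\<in>SS. (real n * f t n) * rA s t) - 1) * ((\<Sum>t\<in>SS. (real n * f t n) * rA s t) - 2)) =
        real n ^ 3 * (f s n * (((\<Sum>t\<in>SS. f t n * rA s t) - 1 / real n) * ((\<Sum>t\<in>SS. f t n * rA s t) - 2 / real n)))"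
        unfolding h using that by (simp add: field_simps power3_eq_cube)
    qed
    also have "\<dots> = real n ^ 3 * G n" unfolding G_def by (simp add: sum_distrib_left)
    finally show ?thesis .
  qed
  have Tb: "\<bar>2 * TT n / real n ^ 3 - F n\<bar> \<le> 3 / real n" if n: "n > 0" for n
  proof -
    have diff: "W3 n - 2 * TT n = (\<Sum>i\<in>{1..n}. (\<Sum>j\<in>{1..n}. \<Sum>k\<in>{1..n}. rA (x i) (x j) * rA (x i) (x k) * rA (x j) (x k))
        - 2 * real (triangles_at {1..n} E i))"
      unfolding W3_def TT_def by (simp add: sum_subtractf of_nat_sum sum_distrib_left)
    have lo: "0 \<le> W3 n - 2 * TT n"
      unfolding diff E_def by (intro sum_nonneg tri_bound(1)[OF K1 xS]) auto
    have "W3 n - 2 * TT n \<le> (\<Sum>i\<in>{1..n}. 3 * real n)"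
      unfolding diff E_def by (intro sum_mono tri_bound(2)[OF K1 xS]) auto
    then have hi: "W3 n - 2 * TT n \<le> 3 * real n * real n" by simp
    have "2 * TT n / real n ^ 3 - F n = - ((W3 n - 2 * TT n) / real n ^ 3)"
      using W3F[OF n] n by (simp add: field_simps)
    then have "\<bar>2 * TT n / real n ^ 3 - F n\<bar> = (W3 n - 2 * TT n) / real n ^ 3" using lo by simp
    also have "\<dots> \<le> (3 * real n * real n) / real n ^ 3"
      using hi n by (intro divide_right_mono) auto
    also have "\<dots> = 3 / real n" using n by (simp add: power3_eq_cube)
    finally show ?thesis .
  qed
  have TL: "(\<lambda>n. 2 * TT n / real n ^ 3) \<longlonglongrightarrow> L3"
  proof -
    have z: "(\<lambda>n. 3 / real n) \<longlonglongrightarrow> 0"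
      using tendsto_mult[OF tendsto_const[of 3] lim_1_over_n] by simp
    have "(\<lambda>n. 2 * TT n / real n ^ 3 - F n) \<longlonglongrightarrow> 0"
    proof (rule Lim_null_comparison[OF _ z])
      show "\<forall>\<^sub>F n in sequentially. norm (2 * TT n / real n ^ 3 - F n) \<le> 3 / real n"
        using eventually_gt_at_top[of 0] by eventually_elim (use Tb in auto)
    qed
    from tendsto_add[OF this FL] show ?thesis by simp
  qed
  have ev: "\<forall>\<^sub>F n in sequentially. (2 * TT n / real n ^ 3) / G n = global_clustering {1..n} E"
    using order_tendstoD(1)[OF GL L2pos] eventually_gt_at_top[of 0]
  proof eventually_elim
    case (elim n)
    then have "real (DN n) > 0" using DG[of n] by simp
    then have "DN n > 0" by simp
    then have "global_clustering {1..n} E = TT n / (real (DN n) / 2)"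
      unfolding global_clustering_def Let_def TT_def DN_def by simp
    also have "\<dots> = (2 * TT n / real n ^ 3) / G n" using DG[of n] elim by (simp add: field_simps)
    finally show ?case by simp
  qed
  have "(\<lambda>n. (2 * TT n / real n ^ 3) / G n) \<longlonglongrightarrow> L3 / L2"
    using TL GL L2pos by (intro tendsto_divide) auto
  from Lim_transform_eventually[OF this ev] show ?thesis
    unfolding ratio E_def .
qed

end



lemma tendsto_from_eps:
  fixes f :: "nat \<Rightarrow> real"
  assumes "\<forall>k. \<forall>\<^sub>F n in sequentially. \<bar>f n - L\<bar> < 1 / real (Suc k)"
  shows "f \<longlonglongrightarrow> L"
proof (rule tendstoI)
  fix e :: real assume "e > 0"
  then obtain k where k: "inverse (real (Suc k)) < e" using reals_Archimedean by blast
  have "\<forall>\<^sub>F n in sequentially. \<bar>f n - L\<bar> < 1 / real (Suc k)" using assms by blast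
  then show "\<forall>\<^sub>F n in sequentially. dist (f n) L < e"
  proof eventually_elim
    case (elim n)
    have k': "1 / real (Suc k) < e" using k by (simp add: inverse_eq_divide)
    show ?case unfolding dist_real_def using elim k' by linarith
  qed
qed

lemma freq_slln:
  fixes M :: "'w measure" and Ks :: "nat \<Rightarrow> 'w \<Rightarrow> nat set" and SS :: "nat set set"
  assumes PS: "prob_space M"
    and ind: "prob_space.indep_vars M (\<lambda>_. count_space UNIV) Ks {1..}"
    and dis: "\<And>i. 1 \<le> i \<Longrightarrow> distr M (count_space UNIV) (Ks i) = measure_pmf (pmf_of_set SS)"
    and fin: "finite SS" and ne: "SS \<noteq> {}" and s: "s \<in> SS"
  shows "AE \<omega> in M. (\<lambda>n. real (card {i\<in>{1..n}. Ks i \<omega> = s}) / real n) \<longlonglongrightarrow> 1 / real (card SS)"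
proof -
  interpret prob_space M by (rule PS)
  have measK: "Ks i \<in> measurable M (count_space UNIV)" if "1 \<le> i" for i
    using ind that unfolding indep_vars_def by auto
  define g where "g y = (if y = s then 1 else (0::real))" for y
  define X where "X i \<omega> = g (Ks i \<omega>)" for i \<omega>
  have gm: "g \<in> borel_measurable (count_space UNIV)" by simp
  have measX: "X i \<in> borel_measurable M" if "1 \<le> i" for i
    unfolding X_def using measurable_compose[OF measK[OF that] gm] by (simp add: comp_def)
  have distX: "distr M borel (X i) = distr (measure_pmf (pmf_of_set SS)) borel g" if "1 \<le> i" for i
  proof -
    have "distr M borel (X i) = distr M borel (g \<circ> Ks i)" by (simp add: X_def[abs_def] comp_def)
    also have "\<dots> = distr (distr M (count_space UNIV) (Ks i)) borel g"
      by (rule distr_distr[symmetric, OF gm measK[OF that]])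
    finally show ?thesis using dis[OF that] by simp
  qed
  define \<mu> where "\<mu> = 1 / real (card SS)"
  have EX1: "expectation (X 1) = \<mu>"
  proof -
    have "expectation (X 1) = integral\<^sup>L (distr M (count_space UNIV) (Ks 1)) g"
      unfolding X_def by (rule integral_distr[symmetric, OF measK gm]) simp
    also have "\<dots> = integral\<^sup>L (measure_pmf (pmf_of_set SS)) g" using dis[of 1] by simp
    also have "\<dots> = sum g SS / real (card SS)" by (rule integral_pmf_of_set[OF ne fin])
    also have "sum g SS = 1" using s fin unfolding g_def by (simp add: sum.delta)
    finally show ?thesis by (simp add: \<mu>_def)
  qed
  have indX: "indep_vars (\<lambda>_. borel) X {1..}"
    unfolding X_def by (rule indep_vars_compose2[OF ind]) (simp add: gm)
  have hoeff: "prob {\<omega>\<in>space M. \<bar>(\<Sum>i\<in>{1..n}. X i \<omega>) / real n - \<mu>\<bar> \<ge> \<epsilon>} \<le> 2 * exp (-2 * real n * \<epsilon>\<^sup>2)"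
    if n: "n \<ge> 1" and eps: "\<epsilon> \<ge> 0" for n \<epsilon>
  proof -
    interpret H: Hoeffding_ineq_iid M "{1..n}" X "X 1" 0 1 "expectation (X 1)"
    proof unfold_locales
      show "finite {1..n}" by simp
      show "indep_vars (\<lambda>_. borel) X {1..n}" by (rule indep_vars_subset[OF indX]) auto
      show "distr M borel (X i) = distr M borel (X 1)" if "i \<in> {1..n}" for i
        using that distX[of i] distX[of 1] by simp
      show "random_variable borel (X 1)" by (rule measX) simp
      show "AE x in M. X 1 x \<in> {0..1}" by (simp add: X_def g_def)
    qed
    have "prob {\<omega>\<in>space M. \<bar>(\<Sum>i\<in>{1..n}. X i \<omega>) / real (card {1..n}) - expectation (X 1)\<bar> \<ge> \<epsilon>}
          \<le> 2 * exp (-2 * real (card {1..n}) * \<epsilon>\<^sup>2 / (1 - 0)\<^sup>2)"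
      by (rule H.Hoeffding_ineq_abs_ge'[OF eps]) (use n in auto)
    then show ?thesis using EX1 by simp
  qed
  define A where "A e n = {\<omega>\<in>space M. \<bar>(\<Sum>i\<in>{1..n}. X i \<omega>) / real n - \<mu>\<bar> \<ge> e}" for e n
  have Ameas: "A e n \<in> sets M" for e n
  proof -
    have [measurable]: "(\<lambda>\<omega>. \<Sum>i\<in>{1..n}. X i \<omega>) \<in> borel_measurable M"
      by (rule borel_measurable_sum) (auto intro: measX)
    show ?thesis unfolding A_def by measurable
  qed
  have ev: "AE \<omega> in M. \<forall>\<^sub>F n in sequentially. \<bar>(\<Sum>i\<in>{1..n}. X i \<omega>) / real n - \<mu>\<bar> < 1 / real (Suc k)" for k
  proof -
    define e where "e = 1 / real (Suc k)"
    have e: "e > 0" by (simp add: e_def)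
    have "summable (\<lambda>n. measure M (A e n))"
    proof (rule summable_comparison_test'[where N=1])
      show "summable (\<lambda>n. 2 * exp (-2 * e\<^sup>2) ^ n)"
        using e by (intro summable_mult summable_geometric) simp
      show "norm (measure M (A e n)) \<le> 2 * exp (-2 * e\<^sup>2) ^ n" if "n \<ge> 1" for n
      proof -
        have "measure M (A e n) \<le> 2 * exp (-2 * real n * e\<^sup>2)"
          unfolding A_def using hoeff[OF that] e by simp
        also have "exp (-2 * real n * e\<^sup>2) = exp (-2 * e\<^sup>2) ^ n"
          by (subst exp_of_nat_mult[symmetric]) (simp add: algebra_simps)
        finally show ?thesis by simp
      qed
    qed
    then have "AE \<omega> in M. \<forall>\<^sub>F n in sequentially. \<omega> \<in> space M - A e n"
      by (intro borel_cantelli_AE1 Ameas) (simp_all add: less_top[symmetric])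
    then show ?thesis
      by (rule AE_mp) (auto simp: A_def e_def elim!: eventually_mono)
  qed
  then have "AE \<omega> in M. \<forall>k. \<forall>\<^sub>F n in sequentially. \<bar>(\<Sum>i\<in>{1..n}. X i \<omega>) / real n - \<mu>\<bar> < 1 / real (Suc k)"
    by (simp add: AE_all_countable)
  then show ?thesis
  proof (rule AE_mp, intro AE_I2 impI)
    fix \<omega> assume a: "\<forall>k. \<forall>\<^sub>F n in sequentially. \<bar>(\<Sum>i\<in>{1..n}. X i \<omega>) / real n - \<mu>\<bar> < 1 / real (Suc k)"
    have "(\<Sum>i\<in>{1..n}. X i \<omega>) = real (card {i\<in>{1..n}. Ks i \<omega> = s})" for n
      unfolding X_def g_def by (rule sum_indicator_card) simp
    then show "(\<lambda>n. real (card {i\<in>{1..n}. Ks i \<omega> = s}) / real n) \<longlonglongrightarrow> 1 / real (card SS)"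
      using tendsto_from_eps[OF a] by (simp add: \<mu>_def)
  qed
qed


theorem theorem3:
  fixes M :: "'w measure" and Ks :: "nat \<Rightarrow> 'w \<Rightarrow> nat set" and K P :: nat
  assumes "prob_space M"
    and "1 \<le> K" and "K \<le> P"
    and "prob_space.indep_vars M (\<lambda>_. count_space UNIV) Ks {1..}"
    and "\<And>i. 1 \<le> i \<Longrightarrow>
           distr M (count_space UNIV) (Ks i) = measure_pmf (pmf_of_set (key_rings K P))"
  shows "AE \<omega> in M. (\<lambda>n. global_clustering {1..n} (rkg_edge Ks \<omega>)) \<longlonglongrightarrow> rkg_CK K P"
proof -
  note PS = assms(1) and K1 = assms(2) and KP = assms(3) and ind = assms(4) and dis = assms(5)
  interpret prob_space M by (rule PS)
  have fin: "finite (key_rings K P)" by (rule key_rings_finite)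
  have ne: "key_rings K P \<noteq> {}"
  proof
    assume "key_rings K P = {}"
    then have "card (key_rings K P) = 0" by simp
    then show False using KP by (simp add: key_rings_card)
  qed
  have measK: "Ks i \<in> measurable M (count_space UNIV)" if "1 \<le> i" for i
    using ind that unfolding indep_vars_def by auto
  have AES: "AE \<omega> in M. \<forall>i. 1 \<le> i \<longrightarrow> Ks i \<omega> \<in> key_rings K P"
    unfolding AE_all_countable
  proof
    fix i :: nat
    show "AE \<omega> in M. 1 \<le> i \<longrightarrow> Ks i \<omega> \<in> key_rings K P"
    proof (cases "1 \<le> i")
      case True
      have "AE y in distr M (count_space UNIV) (Ks i). y \<in> key_rings K P"
        unfolding dis[OF True] AE_measure_pmf_iff using fin ne by simp
      then have "AE \<omega> in M. Ks i \<omega> \<in> key_rings K P"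
        by (subst (asm) AE_distr_iff[OF measK[OF True]]) simp_all
      then show ?thesis by simp
    qed simp
  qed
  have AEF: "AE \<omega> in M. \<forall>s\<in>key_rings K P.
      (\<lambda>n. real (card {i\<in>{1..n}. Ks i \<omega> = s}) / real n) \<longlonglongrightarrow> 1 / real (card (key_rings K P))"
    by (rule AE_finite_allI[OF fin], rule freq_slln[OF PS ind dis fin ne])
  show ?thesis
    using AES AEF
  proof (rule AE_mp[OF AE_conjI], intro AE_I2 impI, elim conjE)
    fix \<omega>
    assume xS': "\<forall>i. 1 \<le> i \<longrightarrow> Ks i \<omega> \<in> key_rings K P"
      and fr: "\<forall>s\<in>key_rings K P.
      (\<lambda>n. real (card {i\<in>{1..n}. Ks i \<omega> = s}) / real n) \<longlonglongrightarrow> 1 / real (card (key_rings K P))"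
    have xS: "\<And>i. 1 \<le> i \<Longrightarrow> Ks i \<omega> \<in> key_rings K P" using xS' by blast
    have e: "rkg_edge Ks \<omega> = (\<lambda>i j. i \<noteq> j \<and> Ks i \<omega> \<inter> Ks j \<omega> \<noteq> {})"
      by (intro ext) (simp add: rkg_edge_def)
    have "(\<lambda>n. global_clustering {1..n} (\<lambda>i j. i \<noteq> j \<and> Ks i \<omega> \<inter> Ks j \<omega> \<noteq> {})) \<longlonglongrightarrow> rkg_CK K P"
    proof (rule det_limit[where x="\<lambda>i. Ks i \<omega>", OF K1 xS])
      fix s assume "s \<in> key_rings K P"
      then show "(\<lambda>n. NN (\<lambda>i. Ks i \<omega>) s n / real n) \<longlonglongrightarrow> 1 / real (card (key_rings K P))"
        using fr by (simp add: NN_def[where x="\<lambda>i. Ks i \<omega>", OF K1 xS])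
    qed
    then show "(\<lambda>n. global_clustering {1..n} (rkg_edge Ks \<omega>)) \<longlonglongrightarrow> rkg_CK K P"
      unfolding e .
  qed
qed

end
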